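(* Let $n,k,l$ be nonnegative integers with $k+l\le n$, let $\alpha,\beta>-1$, set $\sigma=\alpha+\beta+1$, and for $i=k+l,\ldots,n$ and $h=k,\ldots,n-l$ define \[ c_{ih}=\frac{(\alpha+2l+1)_{i-k-l}}{(i-k-l)!}\binom{n}{h}^{-1}\binom{n-k-l}{h-k}\,Q_{i-k-l}(n-l-h;\,\alpha+2l,\,\beta+2k,\,n-k-l). \] Then for each fixed $h$ (and whenever the indices involved lie in the range $k+l\le i\le n$): \[ c_{k+l,h}=\binom{n}{h}^{-1}\binom{n-k-l}{h-k}, \] \[ c_{k+l+1,h}=c_{k+l,h}\left[\alpha+2l+1-\frac{(\sigma+2k+2l+1)(l+h-n)}{k+l-n}\right], \] and for $i=k+l+2,k+l+3,\ldots,n$, \[ c_{ih}=K_h(i)\,c_{i-1,h}+L(i)\,c_{i-2,h}, \] where \[ M(i)=\frac{(i-k-l-1)(n+i+\alpha+\beta)(i+k+\beta-l-1)(2i+\alpha+\beta)}{(2i+\alpha+\beta-2)(i+k+l+\alpha+\beta)(i+l+\alpha-k)(i-n-1)}, \] \[ K_h(i)=\frac{\alpha+l+i-k}{i-k-l}\left[1-M(i)-\frac{(l+h-n)(2i+\alpha+\beta-1)_2}{(i+k+l+\alpha+\beta)(\alpha+l+i-k)(i-n-1)}\right], \] \[ L(i)=\frac{(\alpha+l+i-k-1)_2}{(i-k-l-1)_2}\,M(i). \]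
   Context: Pochhammer symbol: $(a)_0=1$, $(a)_j=a(a+1)\cdots(a+j-1)$. Hahn polynomials: for a nonnegative integer $N$, $a,b>-1$ and $m=0,1,\ldots,N$, $Q_m(x;a,b,N)=\sum_{j=0}^m\frac{(-m)_j(m+a+b+1)_j(-x)_j}{j!\,(a+1)_j\,(-N)_j}$. (The numbers $c_{ih}$ are the coefficients of the modified Jacobi polynomial $J_{i,k,l}^{(\alpha,\beta)}(x)=(1-x)^lx^kR^{(\alpha+2l,\beta+2k)}_{i-k-l}(x)$ in the Bernstein basis $B^n_h(x)=\binom nh x^h(1-x)^{n-h}$, $h=k,\ldots,n-l$, where $R^{(a,b)}_m(x)=\frac{(a+1)_m}{m!}\sum_{j=0}^m\frac{(-m)_j(m+a+b+1)_j}{j!(a+1)_j}(1-x)^j$.) *)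

theory Defs
  imports "HOL-Analysis.Analysis"
begin

definition hahnQ :: "nat \<Rightarrow> real \<Rightarrow> real \<Rightarrow> real \<Rightarrow> nat \<Rightarrow> real" where
  "hahnQ m x a b N = (\<Sum>j=0..m.
      pochhammer (- real m) j * pochhammer (real m + a + b + 1) j * pochhammer (- x) j
      / (fact j * pochhammer (a + 1) j * pochhammer (- real N) j))"

definition cc :: "real \<Rightarrow> real \<Rightarrow> nat \<Rightarrow> nat \<Rightarrow> nat \<Rightarrow> nat \<Rightarrow> nat \<Rightarrow> real" where
  "cc \<alpha> \<beta> n k l i h =
     pochhammer (\<alpha> + 2 * real l + 1) (i - k - l) / fact (i - k - l)
     * (real (n - k - l choose (h - k)) / real (n choose h))
     * hahnQ (i - k - l) (real n - real l - real h) (\<alpha> + 2 * real l) (\<beta> + 2 * real k) (n - k - l)"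

definition Mf :: "real \<Rightarrow> real \<Rightarrow> nat \<Rightarrow> nat \<Rightarrow> nat \<Rightarrow> nat \<Rightarrow> real" where
  "Mf \<alpha> \<beta> n k l i =
     ((real i - real k - real l - 1) * (real n + real i + \<alpha> + \<beta>)
       * (real i + real k + \<beta> - real l - 1) * (2 * real i + \<alpha> + \<beta>))
     / ((2 * real i + \<alpha> + \<beta> - 2) * (real i + real k + real l + \<alpha> + \<beta>)
       * (real i + real l + \<alpha> - real k) * (real i - real n - 1))"

definition Kf :: "real \<Rightarrow> real \<Rightarrow> nat \<Rightarrow> nat \<Rightarrow> nat \<Rightarrow> nat \<Rightarrow> nat \<Rightarrow> real" where
  "Kf \<alpha> \<beta> n k l h i =
     (\<alpha> + real l + real i - real k) / (real i - real k - real l)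
     * (1 - Mf \<alpha> \<beta> n k l i
        - ((real l + real h - real n) * pochhammer (2 * real i + \<alpha> + \<beta> - 1) 2)
          / ((real i + real k + real l + \<alpha> + \<beta>) * (\<alpha> + real l + real i - real k)
             * (real i - real n - 1)))"

definition Lf :: "real \<Rightarrow> real \<Rightarrow> nat \<Rightarrow> nat \<Rightarrow> nat \<Rightarrow> nat \<Rightarrow> real" where
  "Lf \<alpha> \<beta> n k l i =
     pochhammer (\<alpha> + real l + real i - real k - 1) 2
     / pochhammer (real i - real k - real l - 1) 2 * Mf \<alpha> \<beta> n k l i"

end

theory Submission
  imports Defs
begin

lemma ph1: "pochhammer (z::real) (Suc(Suc r)) = z*(z+1)*pochhammer (z+2) r"
proof -
  have "z+1+1 = z+2" by simp
  then show ?thesis by (simp only: pochhammer_rec mult.assoc)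
qed
lemma ph2: "pochhammer (z::real) (Suc(Suc r)) = z*pochhammer (z+1) r*(z+1+real r)"
  by (subst pochhammer_rec, subst pochhammer_Suc, simp add: algebra_simps)
lemma ph3: "pochhammer (z::real) (Suc(Suc r)) = pochhammer z r*(z+real r)*(z+real r+1)"
  by (simp add: pochhammer_Suc algebra_simps)

lemma lin:
  fixes Md Mn C Mr cr X Y Z T :: real
  assumes "Md \<noteq> 0" "Mr = Mn / Md" "cr = C / Md" "Md * X = (Md - Mn) * Y + Mn * Z + C * T"
  shows "X = (1 - Mr) * Y + Mr * Z + cr * T"
proof -
  have "X = ((Md - Mn) * Y + Mn * Z + C * T) / Md" using assms(1,4)
    by (metis nonzero_mult_div_cancel_left)
  moreover have "(1 - Mn/Md)*Y + Mn/Md*Z + C/Md*T = ((Md - Mn)*Y + Mn*Z + C*T)/Md"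
    using assms(1) by (simp add: field_simps)
  ultimately show ?thesis using assms(2,3) by simp
qed

lemma coef_r2:
  fixes a b :: real and p N r :: nat
  defines "mm \<equiv> real p + 2"
  defines "Mr \<equiv> (mm - 1) * (real N + mm + a + b) * (mm + b - 1) * (2*mm + a + b)
      / ((2*mm + a + b - 2) * (mm + a + b) * (mm + a) * (mm - real N - 1))"
  defines "cr \<equiv> (2*mm + a + b - 1) * (2*mm + a + b) / ((mm + a + b) * (mm + a) * (mm - real N - 1))"
  assumes d1: "2*mm + a + b - 2 \<noteq> 0" and d2: "mm + a + b \<noteq> 0" and d3: "mm + a \<noteq> 0"
    and d4: "mm - real N - 1 \<noteq> 0"
  shows "pochhammer (-real (p+2)) (r+2) * pochhammer (real (p+2) + a + b + 1) (r+2)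
    = (1 - Mr) * (pochhammer (-real (p+1)) (r+2) * pochhammer (real (p+1) + a + b + 1) (r+2))
      + Mr * (pochhammer (-real p) (r+2) * pochhammer (real p + a + b + 1) (r+2))
      + cr * (real (r+2) * (pochhammer (-real (p+1)) (r+2) * pochhammer (real (p+1) + a + b + 1) (r+2))
          - pochhammer (-real (p+1)) (r+1) * pochhammer (real (p+1) + a + b + 1) (r+1)
             * real (r+2) * (a + real (r+2)) * (real (r+2) - 1 - real N))"
proof -
  define W where "W = pochhammer (-real p) r"
  define V where "V = pochhammer (real p + a + b + 3) r"
  have e1: "pochhammer (-real (p+2)) (r+2) = (-real p - 2)*(-real p - 1)*W"
    using ph1[of "-real(p+2)" r] unfolding W_def by (simp add: algebra_simps)
  have e2: "pochhammer (-real (p+1)) (r+2) = (-real p - 1)*W*(-real p + r)"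
    using ph2[of "-real(p+1)" r] unfolding W_def by (simp add: algebra_simps)
  have e3: "pochhammer (-real p) (r+2) = W*(-real p + r)*(-real p + r + 1)"
    using ph3[of "-real p" r] unfolding W_def by (simp add: algebra_simps)
  have e4: "pochhammer (-real (p+1)) (r+1) = (-real p - 1)*W"
    using pochhammer_rec[of "-real(p+1)" r] unfolding W_def by (simp add: algebra_simps)
  have f1: "pochhammer (real (p+2) + a + b + 1) (r+2) = V*(real p + a + b + 3 + r)*(real p + a + b + 4 + r)"
    using ph3[of "real (p+2) + a + b + 1" r] unfolding V_def by (simp add: algebra_simps)
  have f2: "pochhammer (real (p+1) + a + b + 1) (r+2) = (real p + a + b + 2)*V*(real p + a + b + 3 + r)"
    using ph2[of "real (p+1) + a + b + 1" r] unfolding V_def by (simp add: algebra_simps)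
  have f3: "pochhammer (real p + a + b + 1) (r+2) = (real p + a + b + 1)*(real p + a + b + 2)*V"
    using ph1[of "real p + a + b + 1" r] unfolding V_def by (simp add: algebra_simps)
  have f4: "pochhammer (real (p+1) + a + b + 1) (r+1) = (real p + a + b + 2)*V"
    using pochhammer_rec[of "real (p+1) + a + b + 1" r] unfolding V_def by (simp add: algebra_simps)
  define Md where "Md = (2*mm + a + b - 2) * (mm + a + b) * (mm + a) * (mm - real N - 1)"
  define Mn where "Mn = (mm - 1) * (real N + mm + a + b) * (mm + b - 1) * (2*mm + a + b)"
  define C where "C = (2*mm + a + b - 1) * (2*mm + a + b) * (2*mm + a + b - 2)"
  have Md0: "Md \<noteq> 0" unfolding Md_def using d1 d2 d3 d4 by simp
  have hM: "Mr = Mn / Md" unfolding Mr_def Md_def Mn_def by simp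
  have hc: "cr = C / Md"
  proof -
    have "C / Md = ((2*mm + a + b - 1) * (2*mm + a + b) * (2*mm + a + b - 2))
        / (((mm + a + b) * (mm + a) * (mm - real N - 1)) * (2*mm + a + b - 2))"
      unfolding C_def Md_def by (simp add: ac_simps)
    also have "\<dots> = cr" unfolding cr_def using d1 by (rule nonzero_mult_divide_mult_cancel_right)
    finally show ?thesis by simp
  qed
  have pol: "Md * (pochhammer (-real (p+2)) (r+2) * pochhammer (real (p+2) + a + b + 1) (r+2))
    = (Md - Mn) * (pochhammer (-real (p+1)) (r+2) * pochhammer (real (p+1) + a + b + 1) (r+2))
      + Mn * (pochhammer (-real p) (r+2) * pochhammer (real p + a + b + 1) (r+2))
      + C * (real (r+2) * (pochhammer (-real (p+1)) (r+2) * pochhammer (real (p+1) + a + b + 1) (r+2))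
          - pochhammer (-real (p+1)) (r+1) * pochhammer (real (p+1) + a + b + 1) (r+1)
             * real (r+2) * (a + real (r+2)) * (real (r+2) - 1 - real N))"
    unfolding e1 e2 e3 e4 f1 f2 f3 f4 unfolding Md_def Mn_def C_def mm_def of_nat_add of_nat_numeral
    by algebra
  show ?thesis by (rule lin[OF Md0 hM hc pol])
qed

definition UU :: "real \<Rightarrow> real \<Rightarrow> nat \<Rightarrow> nat \<Rightarrow> real" where
  "UU a b q j = pochhammer (-real q) j * pochhammer (real q + a + b + 1) j"
definition DD :: "real \<Rightarrow> nat \<Rightarrow> nat \<Rightarrow> real" where
  "DD a N j = fact j * pochhammer (a+1) j * pochhammer (-real N) j"

lemma DD_Suc: "DD a N (Suc j) = DD a N j * (real (Suc j) * (a + 1 + real j) * (- real N + real j))"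
  unfolding DD_def by (simp add: pochhammer_Suc algebra_simps)

lemma Qsum:
  assumes "q \<le> M"
  shows "hahnQ q x a b N = (\<Sum>j\<le>M. UU a b q j * pochhammer (-x) j / DD a N j)"
proof -
  have "hahnQ q x a b N = (\<Sum>j\<le>q. UU a b q j * pochhammer (-x) j / DD a N j)"
    unfolding hahnQ_def UU_def DD_def atLeast0AtMost by (simp add: algebra_simps)
  also have "\<dots> = (\<Sum>j\<le>M. UU a b q j * pochhammer (-x) j / DD a N j)"
  proof (rule sum.mono_neutral_left)
    show "\<forall>i\<in>{..M} - {..q}. UU a b q i * pochhammer (- x) i / DD a N i = 0"
      unfolding UU_def using pochhammer_of_nat_eq_0_lemma[where 'a=real] by auto
  qed (use assms in auto)
  finally show ?thesis .
qed

lemma UU_vanish: "q < j \<Longrightarrow> UU a b q j = 0"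
  unfolding UU_def using pochhammer_of_nat_eq_0_lemma[where 'a=real] by auto

definition EE :: "real \<Rightarrow> real \<Rightarrow> nat \<Rightarrow> nat \<Rightarrow> nat \<Rightarrow> real" where
  "EE a b N q j = real j * UU a b q j
     - (if j = 0 then 0 else UU a b q (j-1) * real j * (a + real j) * (real j - 1 - real N))"

lemma xQ:
  assumes "q + 1 \<le> N" and "a > -1"
  shows "x * hahnQ q x a b N = (\<Sum>j\<le>Suc q. EE a b N q j * pochhammer (-x) j / DD a N j)"
proof -
  let ?P = "\<lambda>j. pochhammer (-x) j"
  have xP: "x * ?P j = real j * ?P j - ?P (Suc j)" for j
    by (simp add: pochhammer_Suc algebra_simps)
  have "x * hahnQ q x a b N = x * (\<Sum>j\<le>Suc q. UU a b q j * ?P j / DD a N j)"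
    by (subst Qsum[of q "Suc q"]) simp_all
  also have "\<dots> = (\<Sum>j\<le>Suc q. UU a b q j * (x * ?P j) / DD a N j)"
    unfolding sum_distrib_left by (rule sum.cong) simp_all
  also have "\<dots> = (\<Sum>j\<le>Suc q. real j * UU a b q j * ?P j / DD a N j)
       - (\<Sum>j\<le>Suc q. UU a b q j * ?P (Suc j) / DD a N j)"
    unfolding xP sum_subtractf[symmetric] by (rule sum.cong) (auto simp: algebra_simps diff_divide_distrib)
  also have "(\<Sum>j\<le>Suc q. UU a b q j * ?P (Suc j) / DD a N j)
      = (\<Sum>j\<le>q. UU a b q j * ?P (Suc j) / DD a N j)"
    using UU_vanish[of q "Suc q" a b] by simp
  also have "\<dots> = (\<Sum>j\<le>Suc q. (if j = 0 then 0 else UU a b q (j-1) * real j * (a + real j) * (real j - 1 - real N)) * ?P j / DD a N j)"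
    unfolding sum.atMost_Suc_shift
  proof (simp, rule sum.cong)
    fix j assume "j \<in> {..q}"
    then have j: "j \<le> q" by simp
    have nz: "real (Suc j) * (a + 1 + real j) * (- real N + real j) \<noteq> 0"
    proof -
      have "a + 1 + real j > 0" using assms(2) by simp
      moreover have "- real N + real j < 0" using assms(1) j by simp
      ultimately show ?thesis by simp
    qed
    show "UU a b q j * ?P (Suc j) / DD a N j =
         UU a b q j * (1 + real j) * (a + (1 + real j)) * (real j - real N) * ?P (Suc j) / DD a N (Suc j)"
    proof -
      let ?c = "real (Suc j) * (a + 1 + real j) * (- real N + real j)"
      have "UU a b q j * (1 + real j) * (a + (1 + real j)) * (real j - real N) * ?P (Suc j)
          = (UU a b q j * ?P (Suc j)) * ?c" (is "?l = _") by (simp add: algebra_simps)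
      then have "UU a b q j * (1 + real j) * (a + (1 + real j)) * (real j - real N) * ?P (Suc j) / DD a N (Suc j)
          = (UU a b q j * ?P (Suc j)) * ?c / (DD a N j * ?c)" by (simp only: DD_Suc)
      also have "\<dots> = UU a b q j * ?P (Suc j) / DD a N j"
        using nz by (rule mult_divide_mult_cancel_right)
      finally show ?thesis by simp
    qed
  qed simp
  finally show ?thesis
    unfolding EE_def sum_subtractf[symmetric] by (simp add: diff_divide_distrib algebra_simps)
qed

lemma coef:
  fixes a b :: real and p N j :: nat
  defines "mm \<equiv> real p + 2"
  defines "Mr \<equiv> (mm - 1) * (real N + mm + a + b) * (mm + b - 1) * (2*mm + a + b)
      / ((2*mm + a + b - 2) * (mm + a + b) * (mm + a) * (mm - real N - 1))"
  defines "cr \<equiv> (2*mm + a + b - 1) * (2*mm + a + b) / ((mm + a + b) * (mm + a) * (mm - real N - 1))"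
  assumes d1: "2*mm + a + b - 2 \<noteq> 0" and d2: "mm + a + b \<noteq> 0" and d3: "mm + a \<noteq> 0"
    and d4: "mm - real N - 1 \<noteq> 0"
  shows "UU a b (p+2) j = (1 - Mr) * UU a b (p+1) j + Mr * UU a b p j + cr * EE a b N (p+1) j"
proof -
  consider "j = 0" | "j = 1" | r where "j = r + 2"
    by (metis One_nat_def add_2_eq_Suc' not0_implies_Suc)
  then show ?thesis
  proof cases
    case 1 then show ?thesis unfolding UU_def EE_def by simp
  next
    case 2
    define Md where "Md = (2*mm + a + b - 2) * (mm + a + b) * (mm + a) * (mm - real N - 1)"
    define Mn where "Mn = (mm - 1) * (real N + mm + a + b) * (mm + b - 1) * (2*mm + a + b)"
    define C where "C = (2*mm + a + b - 1) * (2*mm + a + b) * (2*mm + a + b - 2)"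
    have Md0: "Md \<noteq> 0" unfolding Md_def using d1 d2 d3 d4 by simp
    have hM: "Mr = Mn / Md" unfolding Mr_def Md_def Mn_def by simp
    have hc: "cr = C / Md"
    proof -
      have "C / Md = ((2*mm + a + b - 1) * (2*mm + a + b) * (2*mm + a + b - 2))
          / (((mm + a + b) * (mm + a) * (mm - real N - 1)) * (2*mm + a + b - 2))"
        unfolding C_def Md_def by (simp add: ac_simps)
      also have "\<dots> = cr" unfolding cr_def using d1 by (rule nonzero_mult_divide_mult_cancel_right)
      finally show ?thesis by simp
    qed
    have pol: "Md * UU a b (p+2) 1 = (Md - Mn) * UU a b (p+1) 1 + Mn * UU a b p 1 + C * EE a b N (p+1) 1"
    proof -
      have u1: "UU a b q 1 = - real q * (real q + a + b + 1)" for q unfolding UU_def by simp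
      have e1: "EE a b N (p+1) 1 = UU a b (p+1) 1 - (a + 1) * (- real N)"
        unfolding EE_def UU_def by simp
      show ?thesis unfolding e1 u1 Md_def Mn_def C_def mm_def of_nat_add of_nat_numeral of_nat_1
        by algebra
    qed
    show ?thesis unfolding 2 by (rule lin[OF Md0 hM hc pol])
  next
    case 3
    have "Suc (r + 2) - 1 = r + 2" "r + 2 - 1 = r + 1" "r + 2 \<noteq> 0" by simp_all
    then show ?thesis unfolding 3 UU_def EE_def using coef_r2[OF d1[unfolded mm_def] d2[unfolded mm_def] d3[unfolded mm_def] d4[unfolded mm_def], of r]
      unfolding Mr_def cr_def mm_def by (simp only: if_False)
  qed
qed

definition MM :: "real \<Rightarrow> real \<Rightarrow> nat \<Rightarrow> nat \<Rightarrow> real" where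
  "MM a b N p = (real p + 2 - 1) * (real N + (real p + 2) + a + b) * (real p + 2 + b - 1) * (2*(real p + 2) + a + b)
      / ((2*(real p + 2) + a + b - 2) * ((real p + 2) + a + b) * ((real p + 2) + a) * ((real p + 2) - real N - 1))"
definition CR :: "real \<Rightarrow> real \<Rightarrow> nat \<Rightarrow> nat \<Rightarrow> real" where
  "CR a b N p = (2*(real p + 2) + a + b - 1) * (2*(real p + 2) + a + b)
      / (((real p + 2) + a + b) * ((real p + 2) + a) * ((real p + 2) - real N - 1))"

lemma core:
  fixes a b x :: real and p N :: nat
  assumes a: "a > -1" and b: "b > -1" and pN: "p + 2 \<le> N"
  shows "hahnQ (p+2) x a b N = (1 - MM a b N p) * hahnQ (p+1) x a b N + MM a b N p * hahnQ p x a b N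
     + CR a b N p * (x * hahnQ (p+1) x a b N)"
proof -
  let ?P = "\<lambda>j. pochhammer (-x) j"
  let ?M = "MM a b N p" and ?c = "CR a b N p"
  have p0: "real p \<ge> 0" by simp
  have d1: "2*(real p + 2) + a + b - 2 \<noteq> 0"
  proof -
    have "2*(real p + 2) + a + b - 2 > 0" using a b p0 by (simp add: algebra_simps)
    then show ?thesis by simp
  qed
  have d2: "(real p + 2) + a + b \<noteq> 0"
  proof -
    have "(real p + 2) + a + b > 0" using a b p0 by (simp add: algebra_simps)
    then show ?thesis by simp
  qed
  have d3: "(real p + 2) + a \<noteq> 0"
  proof -
    have "(real p + 2) + a > 0" using a p0 by (simp add: algebra_simps)
    then show ?thesis by simp
  qed
  have d4: "(real p + 2) - real N - 1 \<noteq> 0"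
  proof -
    have "real p + 2 \<le> real N" using pN by linarith
    then show ?thesis by simp
  qed
  have cf: "UU a b (p+2) j = (1 - ?M) * UU a b (p+1) j + ?M * UU a b p j + ?c * EE a b N (p+1) j" for j
    using coef[OF d1 d2 d3 d4, of j] unfolding MM_def CR_def .
  have "hahnQ (p+2) x a b N = (\<Sum>j\<le>p+2. UU a b (p+2) j * ?P j / DD a N j)"
    by (rule Qsum) simp
  also have "\<dots> = (\<Sum>j\<le>p+2. (1 - ?M) * (UU a b (p+1) j * ?P j / DD a N j)
       + ?M * (UU a b p j * ?P j / DD a N j) + ?c * (EE a b N (p+1) j * ?P j / DD a N j))"
    unfolding cf by (rule sum.cong) (simp_all add: distrib_right add_divide_distrib)
  also have "\<dots> = (1 - ?M) * (\<Sum>j\<le>p+2. UU a b (p+1) j * ?P j / DD a N j)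
       + ?M * (\<Sum>j\<le>p+2. UU a b p j * ?P j / DD a N j) + ?c * (\<Sum>j\<le>p+2. EE a b N (p+1) j * ?P j / DD a N j)"
    by (simp only: sum.distrib sum_distrib_left)
  also have "\<dots> = (1 - ?M) * hahnQ (p+1) x a b N + ?M * hahnQ p x a b N + ?c * (x * hahnQ (p+1) x a b N)"
    using Qsum[of "p+1" "p+2" x a b N] Qsum[of "p" "p+2" x a b N] xQ[of "p+1" N a x b] pN a
    by (simp add: numeral_2_eq_2)
  finally show ?thesis .
qed

lemma hahnQ0: "hahnQ 0 x a b N = 1"
  unfolding hahnQ_def by simp

lemma hahnQ1: "hahnQ 1 x a b N = 1 - (1 + a + b + 1) * (-x) / ((a + 1) * (- real N))"
  unfolding hahnQ_def apply (simp add: algebra_simps) by (simp add: add_divide_distrib[symmetric])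

lemma K_aux: "(A::real) * (1 - M - (-x) * Y / Z) = A * (1 - M + Y / Z * x)"
  by (simp add: algebra_simps)

lemma dist_aux: "(c::real) * C * (1 - T) = C * (c - c * T)"
  by (simp add: algebra_simps)

theorem theorem2:
  fixes n k l h :: nat and \<alpha> \<beta> :: real
  assumes "k + l \<le> n" and "\<alpha> > -1" and "\<beta> > -1"
    and "k \<le> h" and "h \<le> n - l"
  shows "(cc \<alpha> \<beta> n k l (k + l) h = real (n - k - l choose (h - k)) / real (n choose h))
    \<and> (k + l + 1 \<le> n \<longrightarrow>
           cc \<alpha> \<beta> n k l (k + l + 1) h =
             cc \<alpha> \<beta> n k l (k + l) h *
               (\<alpha> + 2 * real l + 1
                - ((\<alpha> + \<beta> + 1) + 2 * real k + 2 * real l + 1) * (real l + real h - real n)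
                  / (real k + real l - real n)))
    \<and> (\<forall>i. k + l + 2 \<le> i \<and> i \<le> n \<longrightarrow>
           cc \<alpha> \<beta> n k l i h =
             Kf \<alpha> \<beta> n k l h i * cc \<alpha> \<beta> n k l (i - 1) h
             + Lf \<alpha> \<beta> n k l i * cc \<alpha> \<beta> n k l (i - 2) h)"
proof (intro conjI impI allI)
  define a where "a = \<alpha> + 2 * real l"
  define b where "b = \<beta> + 2 * real k"
  define N where "N = n - k - l"
  define x where "x = real n - real l - real h"
  define Cb where "Cb = real (n - k - l choose (h - k)) / real (n choose h)"
  have a1: "a > -1" unfolding a_def using assms by simp
  have b1: "b > -1" unfolding b_def using assms by simp
  have rN: "real N = real n - real k - real l" unfolding N_def using assms(1) by simp
  have ccq: "cc \<alpha> \<beta> n k l i h = pochhammer (a + 1) (i - k - l) / fact (i - k - l) * Cb * hahnQ (i - k - l) x a b N" for i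
    unfolding cc_def a_def b_def N_def x_def Cb_def by simp
  show "cc \<alpha> \<beta> n k l (k + l) h = real (n - k - l choose (h - k)) / real (n choose h)"
    unfolding ccq by (simp add: hahnQ0 Cb_def)
  {
    assume kl1: "k + l + 1 \<le> n"
    have N0: "real N \<noteq> 0" using kl1 rN by simp
    have a0: "a + 1 \<noteq> 0" using a1 by simp
    have e1: "k + l + 1 - k - l = 1" by simp
    have lhs: "cc \<alpha> \<beta> n k l (k + l + 1) h = (a + 1) * Cb * hahnQ 1 x a b N"
      unfolding ccq e1 by simp
    have rhs0: "cc \<alpha> \<beta> n k l (k + l) h = Cb" unfolding ccq by (simp add: hahnQ0)
    have f: "(\<alpha> + \<beta> + 1) + 2 * real k + 2 * real l + 1 = 1 + a + b + 1" unfolding a_def b_def by simp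
    have g: "real l + real h - real n = - x" unfolding x_def by simp
    have g2: "real k + real l - real n = - real N" using rN by simp
    show "cc \<alpha> \<beta> n k l (k + l + 1) h = cc \<alpha> \<beta> n k l (k + l) h *
               (\<alpha> + 2 * real l + 1
                - ((\<alpha> + \<beta> + 1) + 2 * real k + 2 * real l + 1) * (real l + real h - real n)
                  / (real k + real l - real n))"
    proof -
      let ?T = "(1 + a + b + 1) * (- x) / ((a + 1) * (- real N))"
      have af: "\<alpha> + 2 * real l + 1 = a + 1" unfolding a_def by simp
      have k: "(a + 1) * ?T = (1 + a + b + 1) * (- x) / (- real N)"
        unfolding times_divide_eq_right using a0 by (rule nonzero_mult_divide_mult_cancel_left)
      have "(a + 1) * Cb * hahnQ 1 x a b N = Cb * ((a + 1) - (a + 1) * ?T)"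
        unfolding hahnQ1 by (rule dist_aux)
      also have "\<dots> = Cb * (a + 1 - (1 + a + b + 1) * (- x) / (- real N))" unfolding k ..
      finally show ?thesis unfolding lhs rhs0 f g g2 af .
    qed
  }
  {
    fix i assume i: "k + l + 2 \<le> i \<and> i \<le> n"
    define p where "p = i - k - l - 2"
    have i2: "i - k - l = p + 2" and i1: "i - 1 - k - l = p + 1" and i0: "i - 2 - k - l = p"
      unfolding p_def using i by auto
    have ri: "real i = real p + 2 + real k + real l" unfolding p_def using i by auto
    have pN: "p + 2 \<le> N" unfolding N_def p_def using i by auto
    define w0 where "w0 = pochhammer (a + 1) p / fact p"
    define w1 where "w1 = pochhammer (a + 1) (p+1) / fact (p+1)"
    define w2 where "w2 = pochhammer (a + 1) (p+2) / fact (p+2)"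
    have w1e: "w1 = w0 * ((a + 1 + real p) / (real p + 1))"
      unfolding w1_def w0_def by (simp add: pochhammer_Suc field_simps)
    have w2e: "w2 = w1 * (((real p + 2) + a) / (real p + 2))"
      unfolding w2_def w1_def
      by (simp add: pochhammer_Suc field_simps numeral_2_eq_2 del: fact_Suc) (simp add: algebra_simps)
    let ?M = "MM a b N p" and ?c = "CR a b N p"
    have Meq: "Mf \<alpha> \<beta> n k l i = ?M"
      unfolding Mf_def MM_def ri rN a_def b_def by (simp add: algebra_simps)
    have q1: "\<alpha> + real l + real i - real k = (real p + 2) + a" unfolding ri a_def by simp
    have q2: "real i - real k - real l = real p + 2" unfolding ri by simp
    have q3: "real l + real h - real n = - x" unfolding x_def by simp
    have q4: "pochhammer (2 * real i + \<alpha> + \<beta> - 1) 2 = (2*(real p + 2) + a + b - 1) * (2*(real p + 2) + a + b)"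
      unfolding ri a_def b_def numeral_2_eq_2 pochhammer_Suc by (simp add: algebra_simps)
    have q5: "real i + real k + real l + \<alpha> + \<beta> = (real p + 2) + a + b" unfolding ri a_def b_def by simp
    have q6: "real i - real n - 1 = (real p + 2) - real N - 1" unfolding ri rN by simp
    have q7: "pochhammer (\<alpha> + real l + real i - real k - 1) 2 = (a + 1 + real p) * ((real p + 2) + a)"
      unfolding ri a_def numeral_2_eq_2 pochhammer_Suc by (simp add: algebra_simps)
    have q8: "pochhammer (real i - real k - real l - 1) 2 = (real p + 1) * (real p + 2)"
      unfolding ri numeral_2_eq_2 pochhammer_Suc by (simp add: algebra_simps)
    have Keq: "Kf \<alpha> \<beta> n k l h i = ((real p + 2) + a) / (real p + 2) * (1 - ?M + ?c * x)"
      unfolding Kf_def Meq q1 q2 q3 q4 q5 q6 CR_def by (rule K_aux)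
    have Leq: "Lf \<alpha> \<beta> n k l i = (a + 1 + real p) * ((real p + 2) + a) / ((real p + 1) * (real p + 2)) * ?M"
      unfolding Lf_def Meq q7 q8 ..
    have Q: "hahnQ (p+2) x a b N = (1 - ?M) * hahnQ (p+1) x a b N + ?M * hahnQ p x a b N
     + ?c * (x * hahnQ (p+1) x a b N)" by (rule core[OF a1 b1 pN])
    have pos1: "real p + 1 \<noteq> 0" and pos2: "real p + 2 \<noteq> 0" by linarith+
    have hK: "Kf \<alpha> \<beta> n k l h i * w1 = w2 * (1 - ?M + ?c * x)"
      unfolding Keq w2e by (simp add: ac_simps)
    have hL: "Lf \<alpha> \<beta> n k l i * w0 = w2 * ?M"
      unfolding Leq w2e w1e by (simp add: ac_simps times_divide_times_eq)
    have "Kf \<alpha> \<beta> n k l h i * (w1 * Cb * hahnQ (p+1) x a b N) + Lf \<alpha> \<beta> n k l i * (w0 * Cb * hahnQ p x a b N)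
        = (Kf \<alpha> \<beta> n k l h i * w1) * Cb * hahnQ (p+1) x a b N + (Lf \<alpha> \<beta> n k l i * w0) * Cb * hahnQ p x a b N"
      by (simp add: ac_simps)
    also have "\<dots> = w2 * (1 - ?M + ?c * x) * Cb * hahnQ (p+1) x a b N + w2 * ?M * Cb * hahnQ p x a b N"
      unfolding hK hL ..
    also have "\<dots> = w2 * Cb * hahnQ (p+2) x a b N"
      unfolding Q by (simp add: algebra_simps)
    finally show "cc \<alpha> \<beta> n k l i h = Kf \<alpha> \<beta> n k l h i * cc \<alpha> \<beta> n k l (i - 1) h
             + Lf \<alpha> \<beta> n k l i * cc \<alpha> \<beta> n k l (i - 2) h"
      unfolding ccq i2 i1 i0 w2_def[symmetric] w1_def[symmetric] w0_def[symmetric] by simp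
  }
qed

end
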